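(* Let $S$ be epsilon-strongly graded and suppose the set of epsilon-central elements of $B(\mathcal{E}_G)^*$ is the finite set $\{e_1,\dots,e_k\}$. Put $e'=1_S-\sum_{j=1}^ke_j$. Then $e_1,\dots,e_k,e'$ are pairwise orthogonal central idempotents of $S$ summing to $1_S$, and $S=\bigoplus_{i=1}^ke_iS\oplus e'S$. Moreover: (i) for each $i$, $e_iS=\bigoplus_{g\in N(e_i)}e_iS_g$ is strongly $N(e_i)$-graded, and $e_i$ cannot be written as $f_1+\dots+f_m$ with $m\ge2$ and $f_1,\dots,f_m\in B(\mathcal{E}_G)^*$ pairwise orthogonal; (ii) if $e'=0$, then $S_N=\bigoplus_{g\in N}S_g$ is strongly $N$-graded, where $N=\bigcap_{i=1}^kN(e_i)$; (iii) if $e'\neq0$, then $e'S=\bigoplus_{g\in G}e'S_g$ is an epsilon-strongly $G$-graded ring (with identity $e'$ and $\epsilon'_g=e'\epsilon_g$).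
   Context: $G$ is a group with identity $e$; $S=\bigoplus_{g\in G}S_g$ is an associative unital ring graded by $G$, $R=S_e$, $XY$ denotes finite sums of products. $S$ is epsilon-strongly graded: each ideal $S_gS_{g^{-1}}$ of $R$ has an identity $\epsilon_g$ with $\epsilon_gs=s=s\epsilon_{g^{-1}}$ for $s\in S_g$; $\epsilon_e=1_S$; each $\epsilon_g$ is an idempotent in $Z(R)$. $B(\mathcal{E}_G)$ is the multiplicative semigroup generated by $\{\epsilon_g:g\in G\}$, $B(\mathcal{E}_G)^*=B(\mathcal{E}_G)\setminus\{0\}$, ordered by $a\le b$ iff $a=ab$. For $r\in B(\mathcal{E}_G)^*$, $N(r)=\{g\in G:r\epsilon_g=r\}$. An element $r\in B(\mathcal{E}_G)^*$ is epsilon-central if it is minimal in $B(\mathcal{E}_G)^*$ and $N(r)$ is a subgroup of $G$ (equivalently, for minimal $r$, $r$ is central in $S$). A ring graded by a group $H$ is strongly $H$-graded if $A_gA_h=A_{gh}$ for all $g,h\in H$. *)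

theory Defs
  imports "HOL-Algebra.Group"
begin

text \<open>The ambient ring S is the whole type 'a (class ring_1); the grading group G is a
HOL-Algebra group. Subrings are carrier sets A with their own identity element u.\<close>

definition central :: "'a::ring_1 \<Rightarrow> bool" where
  "central x \<longleftrightarrow> (\<forall>y. x * y = y * x)"

definition add_subgroup :: "'a::ring_1 set \<Rightarrow> bool" where
  "add_subgroup X \<longleftrightarrow> 0 \<in> X \<and> (\<forall>x\<in>X. \<forall>y\<in>X. x - y \<in> X)"

definition unital_subring :: "'a::ring_1 set \<Rightarrow> 'a \<Rightarrow> bool" where
  "unital_subring A u \<longleftrightarrow> add_subgroup A \<and> (\<forall>x\<in>A. \<forall>y\<in>A. x * y \<in> A) \<and>
     u \<in> A \<and> (\<forall>x\<in>A. u * x = x \<and> x * u = x)"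

definition sumprods :: "'a::ring_1 set \<Rightarrow> 'a set \<Rightarrow> 'a set" where
  "sumprods X Y = {\<Sum>i<n. x i * y i | (n::nat) x y. \<forall>i<n. x i \<in> X \<and> y i \<in> Y}"

definition decomp :: "'i set \<Rightarrow> ('i \<Rightarrow> 'a::ring_1 set) \<Rightarrow> ('i \<Rightarrow> 'a) \<Rightarrow> bool" where
  "decomp I X f \<longleftrightarrow> finite {i. f i \<noteq> 0} \<and> (\<forall>i. i \<notin> I \<longrightarrow> f i = 0) \<and> (\<forall>i\<in>I. f i \<in> X i)"

definition dsum_set :: "'i set \<Rightarrow> ('i \<Rightarrow> 'a::ring_1 set) \<Rightarrow> 'a set" where
  "dsum_set I X = {sum f {i. f i \<noteq> 0} | f. decomp I X f}"

definition is_internal_dsum :: "'i set \<Rightarrow> ('i \<Rightarrow> 'a::ring_1 set) \<Rightarrow> 'a set \<Rightarrow> bool" where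
  "is_internal_dsum I X A \<longleftrightarrow> A = dsum_set I X \<and>
     (\<forall>f f'. decomp I X f \<and> decomp I X f' \<and> sum f {i. f i \<noteq> 0} = sum f' {i. f' i \<noteq> 0}
        \<longrightarrow> f = f')"

definition graded_ring :: "('g, 'b) monoid_scheme \<Rightarrow> ('g \<Rightarrow> 'a::ring_1 set) \<Rightarrow> 'a set \<Rightarrow> 'a \<Rightarrow> bool" where
  "graded_ring G Sg A u \<longleftrightarrow> group G \<and> unital_subring A u \<and>
     (\<forall>g\<in>carrier G. add_subgroup (Sg g)) \<and> is_internal_dsum (carrier G) Sg A \<and>
     (\<forall>g\<in>carrier G. \<forall>h\<in>carrier G. \<forall>x\<in>Sg g. \<forall>y\<in>Sg h. x * y \<in> Sg (g \<otimes>\<^bsub>G\<^esub> h))"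

definition strongly_graded_ring :: "('g, 'b) monoid_scheme \<Rightarrow> ('g \<Rightarrow> 'a::ring_1 set) \<Rightarrow> 'a set \<Rightarrow> 'a \<Rightarrow> bool" where
  "strongly_graded_ring G Sg A u \<longleftrightarrow> graded_ring G Sg A u \<and>
     (\<forall>g\<in>carrier G. \<forall>h\<in>carrier G. sumprods (Sg g) (Sg h) = Sg (g \<otimes>\<^bsub>G\<^esub> h))"

text \<open>Epsilon-strongly graded, with the given choice eps g of the identity of S_g S_{g^-1}.\<close>
definition eps_strongly_graded ::
  "('g, 'b) monoid_scheme \<Rightarrow> ('g \<Rightarrow> 'a::ring_1 set) \<Rightarrow> 'a set \<Rightarrow> 'a \<Rightarrow> ('g \<Rightarrow> 'a) \<Rightarrow> bool" where
  "eps_strongly_graded G Sg A u eps \<longleftrightarrow> graded_ring G Sg A u \<and>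
     (\<forall>g\<in>carrier G. eps g \<in> sumprods (Sg g) (Sg (inv\<^bsub>G\<^esub> g)) \<and>
        (\<forall>s\<in>Sg g. eps g * s = s \<and> s * eps (inv\<^bsub>G\<^esub> g) = s))"

definition Bsemi :: "('g, 'b) monoid_scheme \<Rightarrow> ('g \<Rightarrow> 'a::ring_1) \<Rightarrow> 'a set" where
  "Bsemi G eps = {prod_list (map eps gs) | gs. gs \<noteq> [] \<and> set gs \<subseteq> carrier G}"

definition Bstar :: "('g, 'b) monoid_scheme \<Rightarrow> ('g \<Rightarrow> 'a::ring_1) \<Rightarrow> 'a set" where
  "Bstar G eps = Bsemi G eps - {0}"

definition Nset :: "('g, 'b) monoid_scheme \<Rightarrow> ('g \<Rightarrow> 'a::ring_1) \<Rightarrow> 'a \<Rightarrow> 'g set" where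
  "Nset G eps r = {g \<in> carrier G. r * eps g = r}"

text \<open>Minimal w.r.t. a \<le> b iff a = a b.\<close>
definition minimal_B :: "('g, 'b) monoid_scheme \<Rightarrow> ('g \<Rightarrow> 'a::ring_1) \<Rightarrow> 'a \<Rightarrow> bool" where
  "minimal_B G eps r \<longleftrightarrow> r \<in> Bstar G eps \<and> (\<forall>b\<in>Bstar G eps. b = b * r \<longrightarrow> b = r)"

definition eps_central :: "('g, 'b) monoid_scheme \<Rightarrow> ('g \<Rightarrow> 'a::ring_1) \<Rightarrow> 'a \<Rightarrow> bool" where
  "eps_central G eps r \<longleftrightarrow> minimal_B G eps r \<and> subgroup (Nset G eps r) G"

end

theory Submission
  imports Defs
begin


lemma add_subgroup_0: "add_subgroup X \<Longrightarrow> 0 \<in> X" by (simp add: add_subgroup_def)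
lemma add_subgroup_diff: "add_subgroup X \<Longrightarrow> x \<in> X \<Longrightarrow> y \<in> X \<Longrightarrow> x - y \<in> X"
  by (simp add: add_subgroup_def)
lemma add_subgroup_uminus: "add_subgroup X \<Longrightarrow> y \<in> X \<Longrightarrow> - y \<in> X"
  using add_subgroup_diff[of X 0 y] add_subgroup_0[of X] by force
lemma add_subgroup_add: "add_subgroup X \<Longrightarrow> x \<in> X \<Longrightarrow> y \<in> X \<Longrightarrow> x + y \<in> X"
  using add_subgroup_diff[of X x "- y"] add_subgroup_uminus[of X y] by force
lemma add_subgroup_sum: "add_subgroup X \<Longrightarrow> (\<And>i. i \<in> A \<Longrightarrow> f i \<in> X) \<Longrightarrow> sum f A \<in> X"
proof (induction A rule: infinite_finite_induct)
  case (infinite A) then show ?case by (simp add: add_subgroup_0)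
next
  case empty then show ?case by (simp add: add_subgroup_0)
next
  case (insert x F) then show ?case by (simp add: add_subgroup_add)
qed

lemma sumprods_E:
  assumes "x \<in> sumprods X Y"
  obtains n :: nat and a b where "\<And>i. i < n \<Longrightarrow> a i \<in> X" "\<And>i. i < n \<Longrightarrow> b i \<in> Y" "x = (\<Sum>i<n. a i * b i)"
proof -
  from assms obtain n :: nat and a b where "x = (\<Sum>i<n. a i * b i)" "\<forall>i<n. a i \<in> X \<and> b i \<in> Y"
    unfolding sumprods_def by blast
  then show ?thesis by (intro that[of n a b]) auto
qed

lemma sumprods_I:
  assumes "\<And>i. i < (n::nat) \<Longrightarrow> a i \<in> X" "\<And>i. i < n \<Longrightarrow> b i \<in> Y"
  shows "(\<Sum>i<n. a i * b i) \<in> sumprods X Y"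
proof -
  have "\<exists>(n'::nat) x y. (\<Sum>i<n. a i * b i) = (\<Sum>i<n'. x i * y i) \<and> (\<forall>i<n'. x i \<in> X \<and> y i \<in> Y)"
    by (rule exI[of _ n], rule exI[of _ a], rule exI[of _ b]) (use assms in auto)
  then show ?thesis unfolding sumprods_def by simp
qed

lemma sumprods_sub:
  assumes "add_subgroup Z" "\<And>a b. a \<in> X \<Longrightarrow> b \<in> Y \<Longrightarrow> a * b \<in> Z" "x \<in> sumprods X Y"
  shows "x \<in> Z"
  using assms(3) by (elim sumprods_E) (auto intro!: add_subgroup_sum assms(1,2))

lemma sumprods_left_id:
  assumes "x \<in> sumprods X Y" "\<And>a. a \<in> X \<Longrightarrow> u * a = a"
  shows "u * x = x"
  using assms(1) by (elim sumprods_E) (auto simp add: sum_distrib_left mult.assoc[symmetric] assms(2) intro!: sum.cong)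

lemma sumprods_right_id:
  assumes "x \<in> sumprods X Y" "\<And>b. b \<in> Y \<Longrightarrow> b * u = b"
  shows "x * u = x"
  using assms(1) by (elim sumprods_E) (auto simp add: sum_distrib_right mult.assoc assms(2) intro!: sum.cong)

lemma sumprods_mult_left:
  assumes "x \<in> sumprods X Y" "\<And>a. a \<in> X \<Longrightarrow> c * a \<in> X'"
  shows "c * x \<in> sumprods X' Y"
proof -
  from assms(1) obtain n :: nat and a b where ab: "\<And>i. i < n \<Longrightarrow> a i \<in> X" "\<And>i. i < n \<Longrightarrow> b i \<in> Y"
    "x = (\<Sum>i<n. a i * b i)" using sumprods_E[OF assms(1)] by metis
  have "c * x = (\<Sum>i<n. (c * a i) * b i)" by (simp add: ab(3) sum_distrib_left mult.assoc)
  then show ?thesis using ab by (auto intro!: sumprods_I assms(2))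
qed

lemma sumprods_mult_right:
  assumes "x \<in> sumprods X Y" "\<And>b. b \<in> Y \<Longrightarrow> b * c \<in> Y'"
  shows "x * c \<in> sumprods X Y'"
proof -
  from assms(1) obtain n :: nat and a b where ab: "\<And>i. i < n \<Longrightarrow> a i \<in> X" "\<And>i. i < n \<Longrightarrow> b i \<in> Y"
    "x = (\<Sum>i<n. a i * b i)" using sumprods_E[OF assms(1)] by metis
  have "x * c = (\<Sum>i<n. a i * (b i * c))" by (simp add: ab(3) sum_distrib_right mult.assoc)
  then show ?thesis using ab by (auto intro!: sumprods_I assms(2))
qed

lemma sumprods_kill:
  assumes "x \<in> sumprods X Y" "\<And>b. b \<in> Y \<Longrightarrow> b * q = 0"
  shows "x * q = 0"
  using assms(1) by (elim sumprods_E) (auto simp add: sum_distrib_right mult.assoc assms(2) intro!: sum.cong)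

locale esg = group G for G :: "('g, 'b) monoid_scheme" (structure) +
  fixes Sg :: "'g \<Rightarrow> 'a::ring_1 set" and eps :: "'g \<Rightarrow> 'a"
  assumes esg: "eps_strongly_graded G Sg UNIV 1 eps"
begin

lemma gr: "graded_ring G Sg UNIV 1" using esg by (simp add: eps_strongly_graded_def)
lemma addsub: "g \<in> carrier G \<Longrightarrow> add_subgroup (Sg g)" using gr by (simp add: graded_ring_def)
lemma dsum: "is_internal_dsum (carrier G) Sg UNIV" using gr by (simp add: graded_ring_def)
lemma closed: "g \<in> carrier G \<Longrightarrow> h \<in> carrier G \<Longrightarrow> x \<in> Sg g \<Longrightarrow> y \<in> Sg h \<Longrightarrow> x * y \<in> Sg (g \<otimes> h)"
  using gr by (simp add: graded_ring_def)
lemma eps_in: "g \<in> carrier G \<Longrightarrow> eps g \<in> sumprods (Sg g) (Sg (inv g))"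
  using esg by (simp add: eps_strongly_graded_def)
lemma eps_l: "g \<in> carrier G \<Longrightarrow> s \<in> Sg g \<Longrightarrow> eps g * s = s"
  using esg by (simp add: eps_strongly_graded_def)
lemma eps_r: "g \<in> carrier G \<Longrightarrow> s \<in> Sg g \<Longrightarrow> s * eps (inv g) = s"
  using esg by (simp add: eps_strongly_graded_def)
lemma eps_r': "g \<in> carrier G \<Longrightarrow> s \<in> Sg (inv g) \<Longrightarrow> s * eps g = s"
  using eps_r[of "inv g" s] by simp

lemma closedS: "x \<in> Sg \<one> \<Longrightarrow> y \<in> Sg \<one> \<Longrightarrow> x * y \<in> Sg \<one>"
  using closed[of \<one> \<one> x y] by simp
lemma closed_left: "g \<in> carrier G \<Longrightarrow> a \<in> Sg \<one> \<Longrightarrow> s \<in> Sg g \<Longrightarrow> a * s \<in> Sg g"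
  using closed[of \<one> g a s] by simp
lemma closed_right: "g \<in> carrier G \<Longrightarrow> a \<in> Sg \<one> \<Longrightarrow> s \<in> Sg g \<Longrightarrow> s * a \<in> Sg g"
  using closed[of g \<one> s a] by simp

lemma eps_Se: assumes g: "g \<in> carrier G" shows "eps g \<in> Sg \<one>"
proof -
  have "add_subgroup (Sg \<one>)" by (simp add: addsub)
  then show ?thesis
    by (rule sumprods_sub[OF _ _ eps_in[OF g]]) (use closed[of g "inv g"] g in auto)
qed

lemma eps_idem: "g \<in> carrier G \<Longrightarrow> eps g * eps g = eps g"
  by (rule sumprods_left_id[OF eps_in]) (simp_all add: eps_l)

lemma eps_comm_Se: assumes g: "g \<in> carrier G" and a: "a \<in> Sg \<one>" shows "a * eps g = eps g * a"
proof -
  have 1: "a * eps g \<in> sumprods (Sg g) (Sg (inv g))"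
    using sumprods_mult_left[OF eps_in[OF g], of a "Sg g"] closed_left[OF g a] by blast
  have 2: "eps g * a \<in> sumprods (Sg g) (Sg (inv g))"
    using sumprods_mult_right[OF eps_in[OF g], of a "Sg (inv g)"] closed_right[OF _ a] g by blast
  have "eps g * (a * eps g) = a * eps g" by (rule sumprods_left_id[OF 1]) (simp add: eps_l g)
  moreover have "(eps g * a) * eps g = eps g * a" by (rule sumprods_right_id[OF 2]) (simp add: eps_r' g)
  ultimately show ?thesis by (simp add: mult.assoc)
qed

lemma eps_shift:
  assumes g: "g \<in> carrier G" and h: "h \<in> carrier G" and s: "s \<in> Sg g"
  shows "s * eps h = eps (g \<otimes> h) * s"
proof -
  have gh: "g \<otimes> h \<in> carrier G" using g h by simp
  have 1: "s * eps h \<in> sumprods (Sg (g \<otimes> h)) (Sg (inv h))"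
    using sumprods_mult_left[OF eps_in[OF h], of s "Sg (g \<otimes> h)"] closed[OF g h s] by blast
  have 2: "eps (g \<otimes> h) * s \<in> sumprods (Sg (g \<otimes> h)) (Sg (inv h))"
  proof (rule sumprods_mult_right[OF eps_in[OF gh]])
    fix b assume "b \<in> Sg (inv (g \<otimes> h))"
    then have "b * s \<in> Sg (inv (g \<otimes> h) \<otimes> g)" using closed[OF _ g _ s] gh by simp
    also have "inv (g \<otimes> h) \<otimes> g = inv h" using g h by (simp add: inv_mult_group m_assoc)
    finally show "b * s \<in> Sg (inv h)" .
  qed
  have "eps (g \<otimes> h) * (s * eps h) = s * eps h" by (rule sumprods_left_id[OF 1]) (simp add: eps_l gh)
  moreover have "(eps (g \<otimes> h) * s) * eps h = eps (g \<otimes> h) * s"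
    by (rule sumprods_right_id[OF 2]) (simp add: eps_r' h)
  ultimately show ?thesis by (simp add: mult.assoc)
qed


lemma P_Se: "gs \<noteq> [] \<Longrightarrow> set gs \<subseteq> carrier G \<Longrightarrow> prod_list (map eps gs) \<in> Sg \<one>"
proof (induction gs)
  case Nil then show ?case by simp
next
  case (Cons h t)
  show ?case
  proof (cases "t = []")
    case True then show ?thesis using Cons eps_Se by simp
  next
    case False then show ?thesis using Cons eps_Se closedS by simp
  qed
qed

lemma P_comm: "set gs \<subseteq> carrier G \<Longrightarrow> a \<in> Sg \<one> \<Longrightarrow> a * prod_list (map eps gs) = prod_list (map eps gs) * a"
proof (induction gs)
  case Nil then show ?case by simp
next
  case (Cons h t)
  have "a * (eps h * prod_list (map eps t)) = (a * eps h) * prod_list (map eps t)" by (simp add: mult.assoc)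
  also have "\<dots> = eps h * (a * prod_list (map eps t))" using Cons eps_comm_Se[of h a] by (simp add: mult.assoc)
  also have "\<dots> = (eps h * prod_list (map eps t)) * a" using Cons by (simp add: mult.assoc)
  finally show ?case by simp
qed

lemma P_idem: "set gs \<subseteq> carrier G \<Longrightarrow> prod_list (map eps gs) * prod_list (map eps gs) = prod_list (map eps gs)"
proof (induction gs)
  case Nil then show ?case by simp
next
  case (Cons h t)
  let ?t = "prod_list (map eps t)"
  have c: "eps h * ?t = ?t * eps h" using P_comm[of t "eps h"] Cons eps_Se by simp
  have "(eps h * ?t) * (eps h * ?t) = (eps h * eps h) * (?t * ?t)"
    by (simp add: mult.assoc) (metis c mult.assoc)
  then show ?case using Cons eps_idem by simp
qed

lemma P_shift: "g \<in> carrier G \<Longrightarrow> s \<in> Sg g \<Longrightarrow> set gs \<subseteq> carrier G \<Longrightarrow>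
   s * prod_list (map eps gs) = prod_list (map (\<lambda>h. eps (g \<otimes> h)) gs) * s"
proof (induction gs)
  case Nil then show ?case by simp
next
  case (Cons h t)
  have "s * (eps h * prod_list (map eps t)) = (s * eps h) * prod_list (map eps t)" by (simp add: mult.assoc)
  also have "\<dots> = eps (g \<otimes> h) * (s * prod_list (map eps t))" using Cons eps_shift[of g h s] by (simp add: mult.assoc)
  also have "\<dots> = eps (g \<otimes> h) * prod_list (map (\<lambda>h. eps (g \<otimes> h)) t) * s" using Cons by (simp add: mult.assoc)
  finally show ?case by simp
qed

lemma P_mem_eps: "set gs \<subseteq> carrier G \<Longrightarrow> h \<in> set gs \<Longrightarrow> prod_list (map eps gs) * eps h = prod_list (map eps gs)"
proof (induction gs)
  case Nil then show ?case by simp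
next
  case (Cons x t)
  let ?t = "prod_list (map eps t)"
  show ?case
  proof (cases "x = h")
    case True
    have eh: "eps h \<in> Sg \<one>" using Cons True eps_Se by simp
    have c: "?t * eps h = eps h * ?t" using P_comm[of t "eps h"] Cons eh by simp
    have "eps h * ?t * eps h = eps h * eps h * ?t" by (simp add: mult.assoc c)
    then show ?thesis using True Cons eps_idem by simp
  next
    case False
    then show ?thesis using Cons by (simp add: mult.assoc)
  qed
qed

lemma Bsemi_E: assumes "b \<in> Bsemi G eps"
  obtains gs where "gs \<noteq> []" "set gs \<subseteq> carrier G" "b = prod_list (map eps gs)"
  using assms unfolding Bsemi_def by blast

lemma Bsemi_Se: "b \<in> Bsemi G eps \<Longrightarrow> b \<in> Sg \<one>"
  by (auto elim: Bsemi_E intro: P_Se)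
lemma Bsemi_comm: "b \<in> Bsemi G eps \<Longrightarrow> a \<in> Sg \<one> \<Longrightarrow> a * b = b * a"
  by (auto elim!: Bsemi_E intro: P_comm)
lemma Bsemi_idem: "b \<in> Bsemi G eps \<Longrightarrow> b * b = b"
  by (auto elim!: Bsemi_E intro: P_idem)
lemma Bsemi_mult: assumes "b \<in> Bsemi G eps" "c \<in> Bsemi G eps" shows "b * c \<in> Bsemi G eps"
proof -
  obtain gs where gs: "gs \<noteq> []" "set gs \<subseteq> carrier G" "b = prod_list (map eps gs)" using assms(1) by (rule Bsemi_E)
  obtain hs where hs: "hs \<noteq> []" "set hs \<subseteq> carrier G" "c = prod_list (map eps hs)" using assms(2) by (rule Bsemi_E)
  have "\<exists>gs'. b * c = prod_list (map eps gs') \<and> gs' \<noteq> [] \<and> set gs' \<subseteq> carrier G"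
    using gs hs by (intro exI[of _ "gs @ hs"]) auto
  then show ?thesis unfolding Bsemi_def by blast
qed
lemma eps_Bsemi: "g \<in> carrier G \<Longrightarrow> eps g \<in> Bsemi G eps"
  unfolding Bsemi_def by (rule CollectI, rule exI[of _ "[g]"]) simp

lemma min_mult:
  assumes m: "minimal_B G eps r" and b: "b \<in> Bsemi G eps"
  shows "r * b = 0 \<or> r * b = r"
proof -
  have rB: "r \<in> Bsemi G eps" using m by (simp add: minimal_B_def Bstar_def)
  have "r * b \<in> Bsemi G eps" using Bsemi_mult[OF rB b] .
  moreover have "(r * b) * r = r * b"
    using Bsemi_comm[OF rB Bsemi_Se[OF b]] Bsemi_idem[OF rB] by (metis mult.assoc)
  ultimately show ?thesis
  proof (cases "r * b = 0")
    case False
    assume "r * b \<in> Bsemi G eps" "(r * b) * r = r * b"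
    then have "r * b \<in> Bstar G eps" using False by (simp add: Bstar_def)
    then show ?thesis using m \<open>(r * b) * r = r * b\<close> unfolding minimal_B_def by metis
  qed simp
qed

lemma min_eps: "minimal_B G eps r \<Longrightarrow> g \<in> carrier G \<Longrightarrow> r * eps g = 0 \<or> r * eps g = r"
  using min_mult eps_Bsemi by blast

lemma min_props: assumes m: "minimal_B G eps r"
  shows "r \<noteq> 0" "r \<in> Bsemi G eps" "r \<in> Sg \<one>" "r * r = r"
  using m Bsemi_Se Bsemi_idem by (auto simp: minimal_B_def Bstar_def)

lemma r_P_N: "(\<And>k. k \<in> set ks \<Longrightarrow> r * eps k = r) \<Longrightarrow> r * prod_list (map eps ks) = r"
  by (induction ks) (simp_all add: mult.assoc[symmetric])

lemma central_hom:
  assumes m: "minimal_B G eps r" and sg: "subgroup (Nset G eps r) G"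
    and g: "g \<in> carrier G" and s: "s \<in> Sg g"
  shows "r * s = s * r"
proof -
  note rp = min_props[OF m]
  have rcomm: "\<And>a. a \<in> Sg \<one> \<Longrightarrow> a * r = r * a" using Bsemi_comm[OF rp(2)] by simp
  have NI: "\<And>k. k \<in> carrier G \<Longrightarrow> r * eps k = r \<Longrightarrow> k \<in> Nset G eps r" by (simp add: Nset_def)
  have ND: "\<And>k. k \<in> Nset G eps r \<Longrightarrow> r * eps k = r" by (simp add: Nset_def)
  obtain hs where hs: "hs \<noteq> []" "set hs \<subseteq> carrier G" "r = prod_list (map eps hs)"
    using rp(2) by (rule Bsemi_E)
  have hsN: "\<And>h. h \<in> set hs \<Longrightarrow> h \<in> Nset G eps r"
    using hs P_mem_eps NI by (metis subsetD)
  show ?thesis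
  proof (cases "g \<in> Nset G eps r")
    case False
    have ig: "inv g \<notin> Nset G eps r"
      using False g subgroup.m_inv_closed[OF sg, of "inv g"] by auto
    have r0: "r * eps g = 0" using min_eps[OF m g] False NI g by auto
    have r1: "r * eps (inv g) = 0" using min_eps[OF m, of "inv g"] ig NI g by auto
    have "r * s = (r * eps g) * s" using eps_l[OF g s] by (simp add: mult.assoc)
    moreover have "s * r = s * (r * eps (inv g))"
      using eps_r[OF g s] rcomm[OF eps_Se[of "inv g"]] g by (metis inv_closed mult.assoc)
    ultimately show ?thesis using r0 r1 by simp
  next
    case True
    define P' where "P' = prod_list (map (\<lambda>h. eps (g \<otimes> h)) hs)"
    define p where "p = P' * eps g"
    define P'' where "P'' = prod_list (map (\<lambda>h. eps (inv g \<otimes> h)) hs)"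
    have gsh: "set (map (\<lambda>h. g \<otimes> h) hs) \<subseteq> carrier G" using hs g by auto
    have P'_eq: "P' = prod_list (map eps (map (\<lambda>h. g \<otimes> h) hs))" by (simp add: P'_def o_def)
    have P''_eq: "P'' = prod_list (map eps (map (\<lambda>h. inv g \<otimes> h) hs))" by (simp add: P''_def o_def)
    have sr: "s * r = p * s"
    proof -
      have "s * r = P' * s" using P_shift[OF g s hs(2)] hs(3) P'_def by simp
      also have "\<dots> = P' * (eps g * s)" using eps_l[OF g s] by simp
      finally show ?thesis by (simp add: p_def mult.assoc)
    qed
    have rP': "r * P' = r" unfolding P'_eq
      by (rule r_P_N) (use hsN True g sg hs(2) in \<open>auto intro: ND subgroup.m_closed\<close>)
    have rp1: "r * p = r" using rP' ND[OF True] by (simp add: p_def mult.assoc[symmetric])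
    have rP'': "r * P'' = r" unfolding P''_eq
      by (rule r_P_N) (use hsN True g sg hs(2) in \<open>auto intro!: ND subgroup.m_closed subgroup.m_inv_closed\<close>)
    have pSe: "p \<in> Sg \<one>" unfolding p_def P'_eq
      using P_Se[OF _ gsh] hs(1) eps_Se[OF g] closedS by simp
    have tp: "t * p = r * t" if t: "t \<in> Sg (inv g)" for t
    proof -
      have ig: "inv g \<in> carrier G" using g by simp
      have "p = prod_list (map eps (map (\<lambda>h. g \<otimes> h) hs @ [g]))" by (simp add: p_def P'_eq)
      then have "t * p = prod_list (map (\<lambda>h. eps (inv g \<otimes> h)) (map (\<lambda>h. g \<otimes> h) hs @ [g])) * t"
        using P_shift[OF ig t, of "map (\<lambda>h. g \<otimes> h) hs @ [g]"] gsh g by simp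
      also have "map (\<lambda>h. eps (inv g \<otimes> h)) (map (\<lambda>h. g \<otimes> h) hs @ [g]) = map eps hs @ [eps \<one>]"
      proof -
        have "map (\<lambda>h. eps (inv g \<otimes> h)) (map (\<lambda>h. g \<otimes> h) hs) = map eps hs"
          using hs(2) g by (auto simp: m_assoc[symmetric] intro!: map_cong)
        then show ?thesis using g by simp
      qed
      also have "prod_list (map eps hs @ [eps \<one>]) = r * eps \<one>" using hs by simp
      also have "\<dots> = r" using ND subgroup.one_closed[OF sg] by blast
      finally show ?thesis .
    qed
    have tr: "t * r = P'' * t" if t: "t \<in> Sg (inv g)" for t
      using P_shift[OF _ t hs(2)] g hs(3) P''_def by simp
    have "set (map (\<lambda>h. inv g \<otimes> h) hs) \<subseteq> carrier G" using hs g by auto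
    from P_comm[OF this rp(3)] have P''r: "P'' * r = r"
      using rP'' P''_eq by simp
    define q where "q = p - r * p"
    have qSe: "q \<in> Sg \<one>" unfolding q_def
      using pSe rp(3) closedS addsub[of \<one>] add_subgroup_diff by blast
    have tq: "t * q = 0" if t: "t \<in> Sg (inv g)" for t
    proof -
      have "t * q = t * p - (t * r) * p" by (simp add: q_def algebra_simps)
      also have "\<dots> = r * t - P'' * (t * p)" using tp[OF t] tr[OF t] by (simp add: mult.assoc)
      also have "\<dots> = 0" using tp[OF t] P''r by (simp add: mult.assoc[symmetric])
      finally show ?thesis .
    qed
    have "eps g * q = 0" by (rule sumprods_kill[OF eps_in[OF g]]) (rule tq)
    moreover have "eps g * (q * s) = q * s" using eps_l[OF g closed_left[OF g qSe s]] .
    ultimately have qs: "q * s = 0" by (metis mult.assoc mult_zero_left)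
    have "r * s = (r * p) * s" using rp1 by simp
    also have "\<dots> = p * s - q * s" by (simp add: q_def algebra_simps)
    finally show ?thesis using qs sr by simp
  qed
qed

end



lemma decomp_sum_superset:
  assumes "finite F" "{i. f i \<noteq> 0} \<subseteq> F"
  shows "sum f {i. f i \<noteq> 0} = sum f F"
  using assms by (intro sum.mono_neutral_left) auto

lemma dsum_char:
  assumes z: "\<And>i. i \<in> I \<Longrightarrow> 0 \<in> X i"
  shows "x \<in> dsum_set I X \<longleftrightarrow> (\<exists>F f. finite F \<and> F \<subseteq> I \<and> (\<forall>i\<in>F. f i \<in> X i) \<and> x = sum f F)"
proof
  assume "x \<in> dsum_set I X"
  then obtain f where f: "decomp I X f" "x = sum f {i. f i \<noteq> 0}" unfolding dsum_set_def by blast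
  then show "\<exists>F f. finite F \<and> F \<subseteq> I \<and> (\<forall>i\<in>F. f i \<in> X i) \<and> x = sum f F"
    unfolding decomp_def by (intro exI[of _ "{i. f i \<noteq> 0}"] exI[of _ f]) auto
next
  assume "\<exists>F f. finite F \<and> F \<subseteq> I \<and> (\<forall>i\<in>F. f i \<in> X i) \<and> x = sum f F"
  then obtain F f where F: "finite F" "F \<subseteq> I" "\<forall>i\<in>F. f i \<in> X i" "x = sum f F" by blast
  define f' where "f' i = (if i \<in> F then f i else 0)" for i
  have d: "decomp I X f'" unfolding decomp_def f'_def using F z
    by (auto intro: finite_subset[OF _ F(1)])
  have "sum f' {i. f' i \<noteq> 0} = sum f' F"
    using F(1) by (intro decomp_sum_superset) (auto simp: f'_def)
  also have "\<dots> = x" using F(4) by (simp add: f'_def)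
  finally show "x \<in> dsum_set I X" unfolding dsum_set_def using d by blast
qed

lemma dsum_charI:
  assumes "\<And>i. i \<in> I \<Longrightarrow> 0 \<in> X i" "finite F" "F \<subseteq> I" "\<forall>i\<in>F. f i \<in> X i"
  shows "sum f F \<in> dsum_set I X"
proof -
  have "\<exists>F' f'. finite F' \<and> F' \<subseteq> I \<and> (\<forall>i\<in>F'. f' i \<in> X i) \<and> sum f F = sum f' F'"
    using assms(2-4) by (intro exI[of _ F] exI[of _ f]) simp
  then show ?thesis by (simp only: dsum_char[OF assms(1)])
qed

lemma dsum_charE:
  assumes "x \<in> dsum_set I X"
  obtains F f where "finite F" "F \<subseteq> I" "\<forall>i\<in>F. f i \<in> X i" "x = sum f F"
proof -
  from assms obtain f where f: "decomp I X f" "x = sum f {i. f i \<noteq> 0}" unfolding dsum_set_def by blast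
  show ?thesis by (rule that[of "{i. f i \<noteq> 0}" f]) (use f in \<open>auto simp: decomp_def\<close>)
qed

lemma decomp_finite: "decomp I X f \<Longrightarrow> finite {i. f i \<noteq> 0}" by (simp add: decomp_def)

lemma orth_dsum:
  fixes c :: "'i \<Rightarrow> 'a::ring_1"
  assumes fin: "finite I" and idem: "\<And>i. i \<in> I \<Longrightarrow> c i * c i = c i"
    and orth: "\<And>i j. i \<in> I \<Longrightarrow> j \<in> I \<Longrightarrow> i \<noteq> j \<Longrightarrow> c i * c j = 0"
    and one: "sum c I = 1"
  shows "is_internal_dsum I (\<lambda>i. range ((*) (c i))) UNIV"
proof -
  have z: "\<And>i. i \<in> I \<Longrightarrow> 0 \<in> range ((*) (c i))" by (auto intro: image_eqI[of _ _ 0])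
  have proj: "c i * sum f F = f i"
    if d: "decomp I (\<lambda>i. range ((*) (c i))) f" and F: "finite F" "{j. f j \<noteq> 0} \<subseteq> F" "F \<subseteq> I"
      and i: "i \<in> I" for f F i
  proof -
    have fj: "\<And>j. j \<in> I \<Longrightarrow> c i * f j = (if i = j then f j else 0)"
    proof -
      fix j assume j: "j \<in> I"
      obtain y where y: "f j = c j * y" using d j unfolding decomp_def by blast
      show "c i * f j = (if i = j then f j else 0)"
        using y idem[OF j] orth[OF i j] by (auto simp: mult.assoc[symmetric])
    qed
    have "c i * sum f F = (\<Sum>j\<in>F. if i = j then f j else 0)"
      by (simp add: sum_distrib_left) (rule sum.cong, use F fj in auto)
    also have "\<dots> = f i" using F by auto
    finally show ?thesis .
  qed
  have "x \<in> dsum_set I (\<lambda>i. range ((*) (c i)))" for x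
  proof -
    have "x = sum (\<lambda>i. c i * x) I" by (simp add: sum_distrib_right[symmetric] one)
    then have "\<exists>F f. finite F \<and> F \<subseteq> I \<and> (\<forall>i\<in>F. f i \<in> range ((*) (c i))) \<and> x = sum f F"
      using fin by (intro exI[of _ I] exI[of _ "\<lambda>i. c i * x"]) auto
    then show ?thesis using dsum_char[of I "\<lambda>i. range ((*) (c i))" x] z by blast
  qed
  then have "UNIV = dsum_set I (\<lambda>i. range ((*) (c i)))" by blast
  moreover have "f = f'" if d: "decomp I (\<lambda>i. range ((*) (c i))) f" and d': "decomp I (\<lambda>i. range ((*) (c i))) f'"
    and eq: "sum f {i. f i \<noteq> 0} = sum f' {i. f' i \<noteq> 0}" for f f'
  proof
    fix i
    let ?F = "{j. f j \<noteq> 0} \<union> {j. f' j \<noteq> 0}"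
    have fF: "finite ?F" using d d' by (simp add: decomp_def)
    have FI: "?F \<subseteq> I" using d d' by (auto simp: decomp_def)
    have eq2: "sum f ?F = sum f' ?F"
      using eq decomp_sum_superset[OF fF, of f] decomp_sum_superset[OF fF, of f'] by auto
    show "f i = f' i"
    proof (cases "i \<in> I")
      case True
      then show ?thesis using proj[OF d fF _ FI True] proj[OF d' fF _ FI True] eq2 by auto
    next
      case False then show ?thesis using d d' by (simp add: decomp_def)
    qed
  qed
  ultimately show ?thesis unfolding is_internal_dsum_def by blast
qed




context esg begin

lemma decompose: obtains f where "decomp (carrier G) Sg f" "x = sum f {i. f i \<noteq> 0}"
proof -
  have "x \<in> dsum_set (carrier G) Sg" using dsum by (simp add: is_internal_dsum_def)
  then show ?thesis using that unfolding dsum_set_def by blast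
qed

lemma uniq: "decomp (carrier G) Sg f \<Longrightarrow> decomp (carrier G) Sg f' \<Longrightarrow>
  sum f {i. f i \<noteq> 0} = sum f' {i. f' i \<noteq> 0} \<Longrightarrow> f = f'"
  using dsum by (simp add: is_internal_dsum_def)

lemma central_r:
  assumes m: "minimal_B G eps r" and sg: "subgroup (Nset G eps r) G"
  shows "central r"
  unfolding central_def
proof
  fix x
  obtain f where f: "decomp (carrier G) Sg f" "x = sum f {i. f i \<noteq> 0}" by (rule decompose)
  have "r * x = (\<Sum>i\<in>{i. f i \<noteq> 0}. r * f i)" by (simp add: f(2) sum_distrib_left)
  also have "\<dots> = (\<Sum>i\<in>{i. f i \<noteq> 0}. f i * r)"
  proof (rule sum.cong)
    fix i assume "i \<in> {i. f i \<noteq> 0}"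
    then have "i \<in> carrier G" "f i \<in> Sg i" using f(1) by (auto simp: decomp_def)
    then show "r * f i = f i * r" by (rule central_hom[OF m sg])
  qed simp
  also have "\<dots> = x * r" by (simp add: f(2) sum_distrib_right)
  finally show "r * x = x * r" .
qed

lemma kill: assumes m: "minimal_B G eps r" and g: "g \<in> carrier G" "g \<notin> Nset G eps r" and s: "s \<in> Sg g"
  shows "r * s = 0"
proof -
  have "r * eps g = 0" using min_eps[OF m g(1)] g by (auto simp: Nset_def)
  moreover have "r * s = (r * eps g) * s" using eps_l[OF g(1) s] by (simp add: mult.assoc)
  ultimately show ?thesis by simp
qed

lemma decomp_lift:
  assumes "H \<subseteq> carrier G" "\<And>i x. i \<in> H \<Longrightarrow> x \<in> X i \<Longrightarrow> x \<in> Sg i" "decomp H X f"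
  shows "decomp (carrier G) Sg f"
  unfolding decomp_def
proof (intro conjI allI impI ballI)
  show "finite {i. f i \<noteq> 0}" using assms(3) by (simp add: decomp_def)
  show "f i = 0" if "i \<notin> carrier G" for i using that assms(1,3) by (auto simp: decomp_def)
  show "f i \<in> Sg i" if i: "i \<in> carrier G" for i
  proof (cases "i \<in> H")
    case True then show ?thesis using assms(2,3) by (simp add: decomp_def)
  next
    case False then show ?thesis using assms(3) i add_subgroup_0[OF addsub[OF i]] by (simp add: decomp_def)
  qed
qed

lemma cut_graded:
  assumes c: "central c" "c * c = c" and cS: "\<And>g s. g \<in> carrier G \<Longrightarrow> s \<in> Sg g \<Longrightarrow> c * s \<in> Sg g"
    and sg: "subgroup H G"
    and k: "\<And>g s. g \<in> carrier G \<Longrightarrow> g \<notin> H \<Longrightarrow> s \<in> Sg g \<Longrightarrow> c * s = 0"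
  shows "graded_ring (G\<lparr>carrier := H\<rparr>) (\<lambda>g. (*) c ` Sg g) (range ((*) c)) c"
proof -
  have cc: "\<And>y. c * y = y * c" using c(1) by (simp add: central_def)
  have cx: "\<And>x. c * (c * x) = c * x" using c(2) by (simp add: mult.assoc[symmetric])
  have ccm: "\<And>x y. (c * x) * (c * y) = c * (x * y)"
    by (metis cc cx mult.assoc)
  have HG: "H \<subseteq> carrier G" using sg by (rule subgroup.subset)
  have grp: "group (G\<lparr>carrier := H\<rparr>)" using subgroup.subgroup_is_group[OF sg is_group] .
  have us: "unital_subring (range ((*) c)) c"
    unfolding unital_subring_def add_subgroup_def
  proof (intro conjI ballI)
    show "0 \<in> range ((*) c)" by (rule image_eqI[of _ _ 0]) auto
    show "x - y \<in> range ((*) c)" if "x \<in> range ((*) c)" "y \<in> range ((*) c)" for x y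
      using that by (auto simp: right_diff_distrib[symmetric])
    show "x * y \<in> range ((*) c)" if "x \<in> range ((*) c)" "y \<in> range ((*) c)" for x y
      using that by (auto simp: ccm)
    show "c \<in> range ((*) c)" by (rule image_eqI[of _ _ 1]) auto
    show "c * x = x" if "x \<in> range ((*) c)" for x using that cx by auto
    show "x * c = x" if "x \<in> range ((*) c)" for x using that cx cc by auto
  qed
  have asg: "add_subgroup ((*) c ` Sg g)" if g: "g \<in> H" for g
  proof -
    have a: "add_subgroup (Sg g)" using addsub g HG by auto
    show ?thesis unfolding add_subgroup_def
    proof (intro conjI ballI)
      show "0 \<in> (*) c ` Sg g" using add_subgroup_0[OF a] by (auto intro: image_eqI[of _ _ 0])
      show "x - y \<in> (*) c ` Sg g" if "x \<in> (*) c ` Sg g" "y \<in> (*) c ` Sg g" for x y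
        using that add_subgroup_diff[OF a] by (auto simp: right_diff_distrib[symmetric])
    qed
  qed
  have z: "\<And>i. i \<in> H \<Longrightarrow> 0 \<in> (*) c ` Sg i" using asg add_subgroup_0 by blast
  have dseq: "range ((*) c) = dsum_set H (\<lambda>g. (*) c ` Sg g)"
  proof (rule equalityI; rule subsetI)
    fix y assume "y \<in> range ((*) c)"
    then obtain x where y: "y = c * x" by blast
    obtain f where f: "decomp (carrier G) Sg f" "x = sum f {i. f i \<noteq> 0}" by (rule decompose)
    let ?F = "{i. f i \<noteq> 0} \<inter> H"
    have "y = (\<Sum>i\<in>{i. f i \<noteq> 0}. c * f i)" by (simp add: y f(2) sum_distrib_left)
    also have "\<dots> = (\<Sum>i\<in>?F. c * f i)"
    proof (rule sum.mono_neutral_right)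
      show "finite {i. f i \<noteq> 0}" using f(1) by (simp add: decomp_def)
      show "\<forall>i\<in>{i. f i \<noteq> 0} - ?F. c * f i = 0" using f(1) k by (auto simp: decomp_def)
    qed auto
    finally have "y = (\<Sum>i\<in>?F. c * f i)" .
    moreover have "finite ?F" using f(1) by (simp add: decomp_def)
    ultimately have ex: "\<exists>F f'. finite F \<and> F \<subseteq> H \<and> (\<forall>i\<in>F. f' i \<in> (*) c ` Sg i) \<and> y = sum f' F"
      using f(1) by (intro exI[of _ ?F] exI[of _ "\<lambda>i. c * f i"]) (auto simp: decomp_def)
    then obtain F f' where "finite F" "F \<subseteq> H" "\<forall>i\<in>F. f' i \<in> (*) c ` Sg i" "y = sum f' F" by blast
    then show "y \<in> dsum_set H (\<lambda>g. (*) c ` Sg g)" using dsum_charI[OF z] by simp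
  next
    fix y assume y: "y \<in> dsum_set H (\<lambda>g. (*) c ` Sg g)"
    then obtain F f where F: "finite F" "F \<subseteq> H" "\<forall>i\<in>F. f i \<in> (*) c ` Sg i" "y = sum f F"
      by (rule dsum_charE)
    have "sum f F = c * sum f F"
      by (simp add: sum_distrib_left) (rule sum.cong, use F(3) cx in auto)
    then show "y \<in> range ((*) c)" using F(4) by auto
  qed
  have un: "f = f'" if d: "decomp H (\<lambda>g. (*) c ` Sg g) f" and d': "decomp H (\<lambda>g. (*) c ` Sg g) f'"
    and eq: "sum f {i. f i \<noteq> 0} = sum f' {i. f' i \<noteq> 0}" for f f'
    by (rule uniq[OF decomp_lift[OF HG _ d] decomp_lift[OF HG _ d'] eq]) (use HG cS in auto)
  have cl: "x * y \<in> (*) c ` Sg (g \<otimes> h)" if gh: "g \<in> H" "h \<in> H" and xy: "x \<in> (*) c ` Sg g" "y \<in> (*) c ` Sg h" for g h x y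
  proof -
    obtain a b where ab: "a \<in> Sg g" "x = c * a" "b \<in> Sg h" "y = c * b" using xy by blast
    have "a * b \<in> Sg (g \<otimes> h)" using gh HG by (intro closed ab(1) ab(3)) auto
    then show ?thesis using ab(2,4) by (simp add: ccm)
  qed
  have ce: "carrier (G\<lparr>carrier := H\<rparr>) = H" by simp
  have me: "mult (G\<lparr>carrier := H\<rparr>) = mult G" by simp
  show ?thesis unfolding graded_ring_def is_internal_dsum_def ce me
  proof (intro conjI)
    show "\<forall>f f'. decomp H (\<lambda>g. (*) c ` Sg g) f \<and> decomp H (\<lambda>g. (*) c ` Sg g) f' \<and>
      sum f {i. f i \<noteq> 0} = sum f' {i. f' i \<noteq> 0} \<longrightarrow> f = f'" using un by blast
    show "\<forall>g\<in>H. \<forall>h\<in>H. \<forall>x\<in>(*) c ` Sg g. \<forall>y\<in>(*) c ` Sg h. x * y \<in> (*) c ` Sg (g \<otimes> h)"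
      using cl by blast
  qed (use grp us asg dseq in auto)
qed

lemma cut_strong:
  assumes c: "central c" "c * c = c" and g: "g \<in> carrier G" and h: "h \<in> carrier G"
    and ce: "c * eps g = c"
  shows "sumprods ((*) c ` Sg g) ((*) c ` Sg h) = (*) c ` Sg (g \<otimes> h)"
proof
  have cc: "\<And>y. c * y = y * c" using c(1) by (simp add: central_def)
  have cx: "\<And>x. c * (c * x) = c * x" using c(2) by (simp add: mult.assoc[symmetric])
  have ccm: "\<And>x y. (c * x) * (c * y) = c * (x * y)"
    by (metis cc cx mult.assoc)
  have cm2: "\<And>a z. c * (a * (c * z)) = c * (a * z)" by (metis cc cx mult.assoc)
  have a: "add_subgroup (Sg (g \<otimes> h))" using addsub g h by simp
  have asg: "add_subgroup ((*) c ` Sg (g \<otimes> h))" unfolding add_subgroup_def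
  proof (intro conjI ballI)
    show "0 \<in> (*) c ` Sg (g \<otimes> h)" using add_subgroup_0[OF a] by (auto intro: image_eqI[of _ _ 0])
    show "x - y \<in> (*) c ` Sg (g \<otimes> h)" if "x \<in> (*) c ` Sg (g \<otimes> h)" "y \<in> (*) c ` Sg (g \<otimes> h)" for x y
      using that add_subgroup_diff[OF a] by (auto simp: right_diff_distrib[symmetric])
  qed
  show "sumprods ((*) c ` Sg g) ((*) c ` Sg h) \<subseteq> (*) c ` Sg (g \<otimes> h)"
  proof
    fix x assume "x \<in> sumprods ((*) c ` Sg g) ((*) c ` Sg h)"
    then show "x \<in> (*) c ` Sg (g \<otimes> h)"
      by (rule sumprods_sub[OF asg, rotated]) (use closed g h in \<open>auto simp: ccm\<close>)
  qed
  show "(*) c ` Sg (g \<otimes> h) \<subseteq> sumprods ((*) c ` Sg g) ((*) c ` Sg h)"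
  proof
    fix y assume "y \<in> (*) c ` Sg (g \<otimes> h)"
    then obtain x where x: "x \<in> Sg (g \<otimes> h)" "y = c * x" by blast
    obtain n :: nat and a b where ab: "\<And>i. i < n \<Longrightarrow> a i \<in> Sg g" "\<And>i. i < n \<Longrightarrow> b i \<in> Sg (inv g)"
      "eps g = (\<Sum>i<n. a i * b i)" using sumprods_E[OF eps_in[OF g]] by metis
    have bx: "b i * x \<in> Sg h" if "i < n" for i
    proof -
      have "b i * x \<in> Sg (inv g \<otimes> (g \<otimes> h))" using closed ab(2)[OF that] x(1) g h by simp
      also have "inv g \<otimes> (g \<otimes> h) = h" using g h by (simp add: m_assoc[symmetric])
      finally show ?thesis .
    qed
    have "y = c * eps g * x" using ce x(2) by simp
    also have "\<dots> = (\<Sum>i<n. (c * a i) * (c * (b i * x)))"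
      by (simp add: ab(3) sum_distrib_left sum_distrib_right ccm mult.assoc cm2)
    finally show "y \<in> sumprods ((*) c ` Sg g) ((*) c ` Sg h)"
      using ab(1) bx by (auto intro!: sumprods_I)
  qed
qed

end



lemma one_img: "(*) (1::'a::ring_1) ` A = A" by (auto simp: image_iff)

context esg begin

lemma upd_self: "G\<lparr>carrier := carrier G\<rparr> = G" by simp

lemma indecomp:
  assumes m: "minimal_B G eps r"
  shows "\<not> (\<exists>fs. length fs \<ge> 2 \<and> set fs \<subseteq> Bstar G eps \<and>
                 (\<forall>i<length fs. \<forall>j<length fs. i \<noteq> j \<longrightarrow> fs ! i * fs ! j = 0) \<and>
                 r = sum_list fs)"
proof
  assume "\<exists>fs. length fs \<ge> 2 \<and> set fs \<subseteq> Bstar G eps \<and>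
                 (\<forall>i<length fs. \<forall>j<length fs. i \<noteq> j \<longrightarrow> fs ! i * fs ! j = 0) \<and> r = sum_list fs"
  then obtain fs where fs: "length fs \<ge> 2" "set fs \<subseteq> Bstar G eps"
    "\<forall>i<length fs. \<forall>j<length fs. i \<noteq> j \<longrightarrow> fs ! i * fs ! j = 0" "r = sum_list fs" by blast
  have eq: "fs ! k = r" if k: "k < length fs" for k
  proof -
    have kB: "fs ! k \<in> Bstar G eps" using fs(2) k by auto
    then have idem: "fs ! k * fs ! k = fs ! k" using Bsemi_idem by (simp add: Bstar_def)
    have "fs ! k * r = (\<Sum>i\<in>{0..<length fs}. fs ! k * fs ! i)"
      by (simp add: fs(4) sum_list_sum_nth sum_distrib_left)
    also have "\<dots> = (\<Sum>i\<in>{0..<length fs}. if i = k then fs ! k else 0)"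
      by (rule sum.cong) (use fs(3) k idem in auto)
    also have "\<dots> = fs ! k" using k by simp
    finally have fk: "fs ! k = fs ! k * r" by simp
    have mB: "\<forall>b\<in>Bstar G eps. b = b * r \<longrightarrow> b = r" using m by (simp add: minimal_B_def)
    show ?thesis using mB kB fk by blast
  qed
  have l: "0 < length fs" "1 < length fs" using fs(1) by auto
  have "fs ! 0 * fs ! 1 = 0" using fs(3) l by auto
  then have "r * r = 0" using eq[OF l(1)] eq[OF l(2)] by simp
  then show False using min_props[OF m] by simp
qed

lemma part_iii:
  assumes c: "central c" "c * c = c" and cS: "\<And>g s. g \<in> carrier G \<Longrightarrow> s \<in> Sg g \<Longrightarrow> c * s \<in> Sg g"
  shows "eps_strongly_graded G (\<lambda>g. (*) c ` Sg g) (range ((*) c)) c (\<lambda>g. c * eps g)"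
proof -
  have cc: "\<And>y. c * y = y * c" using c(1) by (simp add: central_def)
  have cx: "\<And>x. c * (c * x) = c * x" using c(2) by (simp add: mult.assoc[symmetric])
  have ccm: "\<And>x y. (c * x) * (c * y) = c * (x * y)"
    by (metis cc cx mult.assoc)
  have gr: "graded_ring G (\<lambda>g. (*) c ` Sg g) (range ((*) c)) c"
    using cut_graded[OF c cS subgroup_self] upd_self by auto
  have "c * eps g \<in> sumprods ((*) c ` Sg g) ((*) c ` Sg (inv g))" if g: "g \<in> carrier G" for g
  proof -
    obtain n :: nat and a b where ab: "\<And>i. i < n \<Longrightarrow> a i \<in> Sg g" "\<And>i. i < n \<Longrightarrow> b i \<in> Sg (inv g)"
      "eps g = (\<Sum>i<n. a i * b i)" using sumprods_E[OF eps_in[OF g]] by metis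
    have "c * eps g = (\<Sum>i<n. (c * a i) * (c * b i))" by (simp add: ab(3) ccm sum_distrib_left)
    then show ?thesis using ab by (auto intro!: sumprods_I)
  qed
  moreover have "(c * eps g) * s = s \<and> s * (c * eps (inv g)) = s" if g: "g \<in> carrier G" and s: "s \<in> (*) c ` Sg g" for g s
  proof -
    obtain y where y: "y \<in> Sg g" "s = c * y" using s by blast
    show ?thesis using eps_l[OF g y(1)] eps_r[OF g y(1)] y(2)
      by (metis ccm mult.assoc cc)
  qed
  ultimately show ?thesis unfolding eps_strongly_graded_def using gr by blast
qed

lemma part_i:
  assumes m: "minimal_B G eps r" and sg: "subgroup (Nset G eps r) G"
  shows "strongly_graded_ring (G\<lparr>carrier := Nset G eps r\<rparr>) (\<lambda>g. (*) r ` Sg g) (range ((*) r)) r"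
proof -
  have c: "central r" "r * r = r" using central_r[OF m sg] min_props[OF m] by auto
  have gr: "graded_ring (G\<lparr>carrier := Nset G eps r\<rparr>) (\<lambda>g. (*) r ` Sg g) (range ((*) r)) r"
    by (rule cut_graded[OF c _ sg]) (auto intro: closed_left min_props[OF m] kill[OF m])
  have "sumprods ((*) r ` Sg g) ((*) r ` Sg h) = (*) r ` Sg (g \<otimes> h)"
    if "g \<in> Nset G eps r" "h \<in> Nset G eps r" for g h
    using that by (intro cut_strong[OF c]) (auto simp: Nset_def)
  then show ?thesis unfolding strongly_graded_ring_def using gr by simp
qed

lemma part_ii:
  assumes finE: "finite E" and Em: "\<And>r. r \<in> E \<Longrightarrow> minimal_B G eps r \<and> subgroup (Nset G eps r) G"
    and one: "sum (\<lambda>r. r) E = 1"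
    and N: "N = {g \<in> carrier G. \<forall>r\<in>E. g \<in> Nset G eps r}"
  shows "strongly_graded_ring (G\<lparr>carrier := N\<rparr>) Sg (dsum_set N Sg) 1"
proof -
  have NG: "N \<subseteq> carrier G" using N by auto
  have Nmem: "g \<in> N \<longleftrightarrow> g \<in> carrier G \<and> (\<forall>r\<in>E. g \<in> Nset G eps r)" for g using N by simp
  have sgE: "\<And>r. r \<in> E \<Longrightarrow> subgroup (Nset G eps r) G" using Em by blast
  have sgN: "subgroup N G"
  proof (rule subgroup.intro)
    show "N \<subseteq> carrier G" by (rule NG)
    show "x \<otimes> y \<in> N" if "x \<in> N" "y \<in> N" for x y
    proof -
      have "\<forall>r\<in>E. x \<otimes> y \<in> Nset G eps r"
      proof
        fix r assume r: "r \<in> E"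
        have "x \<in> Nset G eps r" "y \<in> Nset G eps r" using that r Nmem by auto
        then show "x \<otimes> y \<in> Nset G eps r" using subgroup.m_closed[OF sgE[OF r]] by blast
      qed
      then show ?thesis using that Nmem by auto
    qed
    show "\<one> \<in> N" using subgroup.one_closed[OF sgE] Nmem by auto
    show "inv x \<in> N" if "x \<in> N" for x
    proof -
      have "\<forall>r\<in>E. inv x \<in> Nset G eps r"
      proof
        fix r assume r: "r \<in> E"
        have "x \<in> Nset G eps r" using that r Nmem by auto
        then show "inv x \<in> Nset G eps r" using subgroup.m_inv_closed[OF sgE[OF r]] by blast
      qed
      then show ?thesis using that Nmem by auto
    qed
  qed
  have epsN: "eps g = 1" if g: "g \<in> N" for g
  proof -
    have "eps g = 1 * eps g" by simp
    also have "\<dots> = (\<Sum>r\<in>E. r * eps g)" by (simp only: one[symmetric] sum_distrib_right)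
    also have "\<dots> = (\<Sum>r\<in>E. r)"
    proof (rule sum.cong)
      fix r assume "r \<in> E" then show "r * eps g = r" using g Nmem by (auto simp: Nset_def)
    qed simp
    finally show ?thesis using one by simp
  qed
  define D where "D = dsum_set N Sg"
  have z: "\<And>i. i \<in> N \<Longrightarrow> 0 \<in> Sg i" using NG addsub add_subgroup_0 by blast
  have DI: "sum f F \<in> D" if "finite F" "F \<subseteq> N" "\<forall>i\<in>F. f i \<in> Sg i" for F f
    unfolding D_def using dsum_charI[OF z that] .
  have DE: "\<exists>F f. finite F \<and> F \<subseteq> N \<and> (\<forall>i\<in>F. f i \<in> Sg i) \<and> x = sum f F" if "x \<in> D" for x
  proof -
    from that obtain F f where "finite F" "F \<subseteq> N" "\<forall>i\<in>F. f i \<in> Sg i" "x = sum f F"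
      unfolding D_def by (rule dsum_charE)
    then show ?thesis by blast
  qed
  have aD: "add_subgroup D" unfolding add_subgroup_def
  proof (intro conjI ballI)
    show "0 \<in> D" using DI[of "{}"] by simp
    fix x y assume xD: "x \<in> D" and yD: "y \<in> D"
    obtain F f where F: "finite F" "F \<subseteq> N" "\<forall>i\<in>F. f i \<in> Sg i" "x = sum f F" using DE[OF xD] by blast
    obtain F' f' where F': "finite F'" "F' \<subseteq> N" "\<forall>i\<in>F'. f' i \<in> Sg i" "y = sum f' F'" using DE[OF yD] by blast
    let ?h = "\<lambda>i. (if i \<in> F then f i else 0) - (if i \<in> F' then f' i else 0)"
    have e1: "(F \<union> F') \<inter> F = F" "(F \<union> F') \<inter> F' = F'" by auto
    have "sum ?h (F \<union> F') = sum f ((F \<union> F') \<inter> F) - sum f' ((F \<union> F') \<inter> F')"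
      using F(1) F'(1) by (simp only: sum_subtractf sum.inter_restrict finite_UnI)
    also have "\<dots> = x - y" using F(4) F'(4) by (simp only: e1)
    finally have xy: "x - y = sum ?h (F \<union> F')" by simp
    have "?h i \<in> Sg i" if i: "i \<in> F \<union> F'" for i
    proof -
      have iN: "i \<in> carrier G" using i F(2) F'(2) NG by auto
      note a = addsub[OF iN]
      have "(if i \<in> F then f i else 0) \<in> Sg i" using F(3) add_subgroup_0[OF a] by auto
      moreover have "(if i \<in> F' then f' i else 0) \<in> Sg i" using F'(3) add_subgroup_0[OF a] by auto
      ultimately show ?thesis by (rule add_subgroup_diff[OF a])
    qed
    then show "x - y \<in> D" unfolding xy using F(1,2) F'(1,2) by (intro DI) auto
  qed
  have SD: "s \<in> D" if "k \<in> N" "s \<in> Sg k" for k s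
    using DI[of "{k}" "\<lambda>_. s"] that by simp
  have mD: "x * y \<in> D" if xD: "x \<in> D" and yD: "y \<in> D" for x y
  proof -
    obtain F f where F: "finite F" "F \<subseteq> N" "\<forall>i\<in>F. f i \<in> Sg i" "x = sum f F" using DE[OF xD] by blast
    obtain F' f' where F': "finite F'" "F' \<subseteq> N" "\<forall>i\<in>F'. f' i \<in> Sg i" "y = sum f' F'" using DE[OF yD] by blast
    have "x * y = (\<Sum>i\<in>F. \<Sum>j\<in>F'. f i * f' j)" by (simp add: F(4) F'(4) sum_product)
    also have "\<dots> \<in> D"
    proof (intro add_subgroup_sum[OF aD])
      fix i j assume ij: "i \<in> F" "j \<in> F'"
      then have ijN: "i \<in> N" "j \<in> N" using F(2) F'(2) by auto
      then have "f i * f' j \<in> Sg (i \<otimes> j)" using NG ij F(3) F'(3) by (intro closed) auto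
      then show "f i * f' j \<in> D" using SD subgroup.m_closed[OF sgN ijN] by blast
    qed
    finally show ?thesis .
  qed
  have oneD: "1 \<in> D"
  proof -
    have "(\<Sum>r\<in>E. r) \<in> Sg \<one>"
      by (rule add_subgroup_sum[OF addsub[of \<one>]]) (use Em min_props in auto)
    then have "1 \<in> Sg \<one>" using one by simp
    then show ?thesis using SD subgroup.one_closed[OF sgN] by blast
  qed
  have us: "unital_subring D 1" unfolding unital_subring_def using aD mD oneD by simp
  have un: "f = f'" if "decomp N Sg f" "decomp N Sg f'" "sum f {i. f i \<noteq> 0} = sum f' {i. f' i \<noteq> 0}" for f f'
    by (rule uniq[OF decomp_lift[OF NG _ that(1)] decomp_lift[OF NG _ that(2)] that(3)]) auto
  have ce: "carrier (G\<lparr>carrier := N\<rparr>) = N" by simp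
  have me: "mult (G\<lparr>carrier := N\<rparr>) = mult G" by simp
  have gr: "graded_ring (G\<lparr>carrier := N\<rparr>) Sg D 1"
    unfolding graded_ring_def is_internal_dsum_def ce me
  proof (intro conjI)
    show "group (G\<lparr>carrier := N\<rparr>)" by (rule subgroup.subgroup_is_group[OF sgN is_group])
    show "\<forall>f f'. decomp N Sg f \<and> decomp N Sg f' \<and> sum f {i. f i \<noteq> 0} = sum f' {i. f' i \<noteq> 0} \<longrightarrow> f = f'"
      using un by blast
    show "\<forall>g\<in>N. \<forall>h\<in>N. \<forall>x\<in>Sg g. \<forall>y\<in>Sg h. x * y \<in> Sg (g \<otimes> h)" using closed NG by blast
    show "\<forall>g\<in>N. add_subgroup (Sg g)" using addsub NG by blast
  qed (use us D_def in auto)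
  have "sumprods (Sg g) (Sg h) = Sg (g \<otimes> h)" if gh: "g \<in> N" "h \<in> N" for g h
  proof -
    have c1: "central (1::'a)" by (simp add: central_def)
    have "sumprods ((*) 1 ` Sg g) ((*) 1 ` Sg h) = (*) 1 ` Sg (g \<otimes> h)"
      by (rule cut_strong[OF c1]) (use gh NG epsN in auto)
    then show ?thesis by (simp add: one_img)
  qed
  then show ?thesis unfolding strongly_graded_ring_def using gr D_def me by simp
qed

end



theorem mainTheorem10:
  fixes G :: "'g monoid" and Sg :: "'g \<Rightarrow> 'a::ring_1 set" and eps :: "'g \<Rightarrow> 'a"
    and E :: "'a set" and e' :: 'a
  assumes eps: "eps_strongly_graded G Sg UNIV 1 eps"
    and E: "E = {r. eps_central G eps r}"
    and finE: "finite E"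
    and e': "e' = 1 - (\<Sum>r\<in>E. r)"
  shows "(\<forall>r\<in>E. r * r = r \<and> central r) \<and> e' * e' = e' \<and> central e' \<and>
         (\<forall>r\<in>E. \<forall>s\<in>E. r \<noteq> s \<longrightarrow> r * s = 0) \<and> (\<forall>r\<in>E. r * e' = 0 \<and> e' * r = 0) \<and>
         (\<Sum>r\<in>E. r) + e' = 1 \<and>
         is_internal_dsum (Some ` E \<union> {None})
           (\<lambda>i. case i of None \<Rightarrow> range ((*) e') | Some r \<Rightarrow> range ((*) r)) UNIV \<and>
         (\<forall>r\<in>E.
            strongly_graded_ring (G\<lparr>carrier := Nset G eps r\<rparr>) (\<lambda>g. (*) r ` Sg g) (range ((*) r)) r \<and>
            \<not> (\<exists>fs. length fs \<ge> 2 \<and> set fs \<subseteq> Bstar G eps \<and>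
                 (\<forall>i<length fs. \<forall>j<length fs. i \<noteq> j \<longrightarrow> fs ! i * fs ! j = 0) \<and>
                 r = sum_list fs)) \<and>
         (e' = 0 \<longrightarrow>
            (let N = {g \<in> carrier G. \<forall>r\<in>E. g \<in> Nset G eps r} in
             strongly_graded_ring (G\<lparr>carrier := N\<rparr>) Sg (dsum_set N Sg) 1)) \<and>
         (e' \<noteq> 0 \<longrightarrow>
            eps_strongly_graded G (\<lambda>g. (*) e' ` Sg g) (range ((*) e')) e' (\<lambda>g. e' * eps g))"
proof -
  have grpG: "group G" using eps by (simp add: eps_strongly_graded_def graded_ring_def)
  interpret esg G Sg eps by (rule esg.intro[OF grpG]) (simp add: esg_axioms_def eps)
  have Em: "minimal_B G eps r" "subgroup (Nset G eps r) G" if "r \<in> E" for r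
    using that E by (auto simp: eps_central_def)
  have Ec: "central r" if "r \<in> E" for r using central_r Em that by blast
  have Ei: "r * r = r" "r \<in> Sg \<one>\<^bsub>G\<^esub>" "r \<in> Bsemi G eps" if "r \<in> E" for r using min_props Em that by blast+
  have cm: "r * y = y * r" if "r \<in> E" for r y using Ec[OF that] by (simp add: central_def)
  have orth: "r * s = 0" if rs: "r \<in> E" "s \<in> E" "r \<noteq> s" for r s
  proof (rule ccontr)
    assume ne: "r * s \<noteq> 0"
    have "r * s = r" using min_mult[OF Em(1)[OF rs(1)] Ei(3)[OF rs(2)]] ne by blast
    moreover have "s * r = s" using min_mult[OF Em(1)[OF rs(2)] Ei(3)[OF rs(1)]] ne cm[OF rs(1), of s] by auto
    ultimately show False using cm[OF rs(1), of s] rs(3) by simp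
  qed
  define T where "T = (\<Sum>r\<in>E. r)"
  have rs_delta: "r * s = (if s = r then r else 0)" "s * r = (if s = r then r else 0)" if "r \<in> E" "s \<in> E" for r s
    using orth[OF that(1,2)] orth[OF that(2,1)] Ei(1)[OF that(1)] by auto
  have rT: "r * T = r" if r: "r \<in> E" for r
  proof -
    have "r * T = (\<Sum>s\<in>E. if s = r then r else 0)" unfolding T_def sum_distrib_left
      by (rule sum.cong) (use rs_delta r in auto)
    also have "\<dots> = r" using finE r by simp
    finally show ?thesis .
  qed
  have Tr: "T * r = r" if r: "r \<in> E" for r
  proof -
    have "T * r = (\<Sum>s\<in>E. if s = r then r else 0)" unfolding T_def sum_distrib_right
      by (rule sum.cong) (use rs_delta r in auto)
    also have "\<dots> = r" using finE r by simp
    finally show ?thesis .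
  qed
  have TT: "T * T = T"
  proof -
    have "T * T = (\<Sum>r\<in>E. r * T)" by (simp add: T_def sum_distrib_right)
    also have "\<dots> = T" unfolding T_def using rT by (simp add: T_def)
    finally show ?thesis .
  qed
  have Tc: "T * y = y * T" for y
    unfolding T_def sum_distrib_left sum_distrib_right by (rule sum.cong) (use cm in auto)
  have e'T: "e' = 1 - T" using e' T_def by simp
  have f1: "\<forall>r\<in>E. r * r = r \<and> central r" using Ei Ec by blast
  have f2: "e' * e' = e'" unfolding e'T by (simp add: algebra_simps TT)
  have f3: "central e'" unfolding central_def e'T by (simp add: algebra_simps Tc)
  have f4: "\<forall>r\<in>E. \<forall>s\<in>E. r \<noteq> s \<longrightarrow> r * s = 0" using orth by blast
  have f5: "\<forall>r\<in>E. r * e' = 0 \<and> e' * r = 0" unfolding e'T using rT Tr by (simp add: algebra_simps)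
  have f6: "(\<Sum>r\<in>E. r) + e' = 1" using e' by simp
  define cc where "cc i = (case i of None \<Rightarrow> e' | Some r \<Rightarrow> r)" for i
  have fam: "(\<lambda>i. case i of None \<Rightarrow> range ((*) e') | Some r \<Rightarrow> range ((*) r)) = (\<lambda>i. range ((*) (cc i)))"
    by (rule ext) (simp add: cc_def split: option.split)
  have f7: "is_internal_dsum (Some ` E \<union> {None})
           (\<lambda>i. case i of None \<Rightarrow> range ((*) e') | Some r \<Rightarrow> range ((*) r)) UNIV"
    unfolding fam
  proof (rule orth_dsum)
    show "finite (Some ` E \<union> {None})" using finE by simp
    show "cc i * cc i = cc i" if "i \<in> Some ` E \<union> {None}" for i
      using that f2 Ei(1) by (auto simp: cc_def)
    show "cc i * cc j = 0" if "i \<in> Some ` E \<union> {None}" "j \<in> Some ` E \<union> {None}" "i \<noteq> j" for i j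
      using that orth f5 by (auto simp: cc_def) (metis orth)
    have "sum cc (Some ` E \<union> {None}) = sum cc (Some ` E) + cc None"
      using finE by (subst sum.union_disjoint) auto
    also have "sum cc (Some ` E) = T" unfolding T_def by (subst sum.reindex) (auto simp: cc_def)
    finally show "sum cc (Some ` E \<union> {None}) = 1" using e'T by (simp add: cc_def)
  qed
  have f8: "\<forall>r\<in>E.
            strongly_graded_ring (G\<lparr>carrier := Nset G eps r\<rparr>) (\<lambda>g. (*) r ` Sg g) (range ((*) r)) r \<and>
            \<not> (\<exists>fs. length fs \<ge> 2 \<and> set fs \<subseteq> Bstar G eps \<and>
                 (\<forall>i<length fs. \<forall>j<length fs. i \<noteq> j \<longrightarrow> fs ! i * fs ! j = 0) \<and>
                 r = sum_list fs)"
    using part_i indecomp Em by blast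
  have f9: "e' = 0 \<longrightarrow>
            (let N = {g \<in> carrier G. \<forall>r\<in>E. g \<in> Nset G eps r} in
             strongly_graded_ring (G\<lparr>carrier := N\<rparr>) Sg (dsum_set N Sg) 1)"
  proof
    assume "e' = 0"
    then have one: "(\<Sum>r\<in>E. r) = 1" using e' by simp
    show "let N = {g \<in> carrier G. \<forall>r\<in>E. g \<in> Nset G eps r} in
             strongly_graded_ring (G\<lparr>carrier := N\<rparr>) Sg (dsum_set N Sg) 1"
      unfolding Let_def by (rule part_ii[OF finE _ one refl]) (use Em in auto)
  qed
  have cS: "e' * s \<in> Sg g" if g: "g \<in> carrier G" and s: "s \<in> Sg g" for g s
  proof -
    have "T * s = (\<Sum>r\<in>E. r * s)" by (simp add: T_def sum_distrib_right)
    also have "\<dots> \<in> Sg g" by (rule add_subgroup_sum[OF addsub[OF g]]) (use closed_left[OF g _ s] Ei in auto)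
    finally have "T * s \<in> Sg g" .
    then have "s - T * s \<in> Sg g" using add_subgroup_diff[OF addsub[OF g]] s by blast
    then show ?thesis unfolding e'T by (simp add: algebra_simps)
  qed
  have f10: "e' \<noteq> 0 \<longrightarrow>
            eps_strongly_graded G (\<lambda>g. (*) e' ` Sg g) (range ((*) e')) e' (\<lambda>g. e' * eps g)"
    using part_iii[OF f3 f2 cS] by blast
  show ?thesis using f1 f2 f3 f4 f5 f6 f7 f8 f9 f10 by (intro conjI) assumption+
qed


end
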